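(* Let $\sigma>0$ and define the even function $k:\mathbb{R}\to\mathbb{R}$ by \[ k(r)=\operatorname{erfc}\!\left(\frac{r}{\sigma\sqrt{2}}\right)-\frac{1}{\sqrt{\pi}}\left(\frac{r}{\sigma\sqrt{2}}\right)E_1\!\left(\frac{r^2}{2\sigma^2}\right)\quad (r>0),\qquad k(0)=1,\qquad k(-r)=k(r), \] where $\operatorname{erfc}(x)=1-\frac{1}{\sqrt{\pi}}\int_{-x}^{x}e^{-s^2}ds$ and $E_1(z)=\int_z^\infty \frac{e^{-s}}{s}\,ds$. Then for $t\neq 0$, \[ \mathcal{F}[k](t)=\int_{-\infty}^{\infty}k(r)e^{\mathbf{i} rt}\,dr=\frac{2}{t\sqrt{\pi}}\int_0^{\infty}E_1(r^2)\sin(\sigma\sqrt{2}\,t r)\,dr. \]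
   Context: This $k$ is the kernel $k(r)=\int_0^\infty\max\{0,1-|r|/x\}\,dF(x)$ associated with the half-normal distribution with scale $\sigma$ (density $\frac{\sqrt2}{\sigma\sqrt\pi}e^{-x^2/(2\sigma^2)}$ on $(0,\infty)$). *)

theory Defs
  imports "HOL-Analysis.Analysis"
begin

definition erfc :: "real \<Rightarrow> real" where
  "erfc x = 1 - 1 / sqrt pi * (LBINT s=ereal (-x)..ereal x. exp (-(s\<^sup>2)))"

definition E1 :: "real \<Rightarrow> real" where
  "E1 z = (LBINT s=ereal z..\<infinity>. exp (-s) / s)"

definition kern :: "real \<Rightarrow> real \<Rightarrow> real" where
  "kern \<sigma> r = (if r = 0 then 1 else
     erfc (\<bar>r\<bar> / (\<sigma> * sqrt 2))
     - 1 / sqrt pi * (\<bar>r\<bar> / (\<sigma> * sqrt 2)) * E1 (r\<^sup>2 / (2 * \<sigma>\<^sup>2)))"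

definition fourier :: "(real \<Rightarrow> real) \<Rightarrow> real \<Rightarrow> complex" where
  "fourier f t = (LINT r|lborel. complex_of_real (f r) * cis (r * t))"

end

theory Submission
  imports Defs "HOL-Probability.Distributions" "HOL-Real_Asymp.Real_Asymp"
begin


lemma exp_int: "set_integrable lborel {z<..} (\<lambda>s::real. exp (-s))"
proof -
  have "set_integrable lborel (einterval (ereal z) \<infinity>) (\<lambda>s::real. exp (-s))"
  proof (rule interval_integral_FTC_nonneg(1)[where F="\<lambda>s. - exp (-s)" and A="- exp (-z)" and B=0])
    show "(((\<lambda>s. - exp (- s)) \<circ> real_of_ereal) \<longlongrightarrow> - exp (- z)) (at_right (ereal z))"
      unfolding ereal_tendsto_simps1 by (intro tendsto_intros)
    show "(((\<lambda>s. - exp (- s)) \<circ> real_of_ereal) \<longlongrightarrow> 0) (at_left \<infinity>)"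
      unfolding ereal_tendsto_simps1 by real_asymp
  qed (auto intro!: derivative_eq_intros)
  then show ?thesis by simp
qed

lemma h_int: "0 < z \<Longrightarrow> set_integrable lborel {z<..} (\<lambda>s::real. exp (-s) / s)"
proof (rule set_integrable_bound[where f="\<lambda>s. exp (-s) / z"])
  assume "0 < z"
  show "set_integrable lborel {z<..} (\<lambda>s. exp (- s) / z)"
    using exp_int[of z] by (simp add: set_integrable_divide)
  show "set_borel_measurable lborel {z<..} (\<lambda>s. exp (- s) / s)"
    unfolding set_borel_measurable_def by measurable
  show "AE x in lborel. x \<in> {z<..} \<longrightarrow> norm (exp (- x) / x) \<le> norm (exp (- x) / z)"
    using \<open>0<z\<close> by (auto intro!: AE_I2 frac_le)
qed



lemma E1_split: "0 < z \<Longrightarrow> E1 z = E1 1 - (LBINT s=ereal 1..ereal z. exp (-s) / s)"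
proof -
  assume z: "0 < z"
  have int: "interval_lebesgue_integrable lborel (min (ereal z) (min (ereal 1) \<infinity>)) (max (ereal z) (max (ereal 1) \<infinity>)) (\<lambda>s. exp (-s) / s)"
    using h_int[of z] h_int[of 1] z by (auto simp: interval_integrable_to_infinity_eq min_def)
  have "(LBINT s=ereal z..ereal 1. exp (-s) / s) + (LBINT s=ereal 1..\<infinity>. exp (-s) / s) = (LBINT s=ereal z..\<infinity>. exp (-s) / s)"
    by (rule interval_integral_sum[OF int])
  then show ?thesis unfolding E1_def
    by (subst (asm) interval_integral_endpoints_reverse) simp
qed

lemma E1_nonneg: "0 < z \<Longrightarrow> 0 \<le> E1 z"
  unfolding E1_def interval_integral_to_infinity_eq set_lebesgue_integral_def
  by (intro integral_nonneg_AE AE_I2) (auto split: split_indicator)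

lemma E1_deriv: "0 < z \<Longrightarrow> (E1 has_real_derivative (-(exp (-z) / z))) (at z)"
proof -
  assume z: "0 < z"
  define a where "a = min 1 (z/2)"
  define b where "b = max 1 (z+1)"
  have ab: "0 < a" "a \<le> 1" "1 \<le> b" "a < z" "z < b" using z by (auto simp: a_def b_def)
  have cont: "continuous_on {a..b} (\<lambda>s. exp (-s) / s)"
    using ab by (intro continuous_intros) auto
  have "((\<lambda>u. LBINT s=ereal 1..ereal u. exp (-s) / s) has_vector_derivative (exp (-z) / z)) (at z within {a..b})"
    using ab by (intro interval_integral_FTC2 cont) auto
  then have "((\<lambda>u. LBINT s=ereal 1..ereal u. exp (-s) / s) has_real_derivative (exp (-z) / z)) (at z)"
    using ab by (simp add: at_within_Icc_at has_real_derivative_iff_has_vector_derivative)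
  then have "((\<lambda>u. E1 1 - (LBINT s=ereal 1..ereal u. exp (-s) / s)) has_real_derivative (-(exp (-z) / z))) (at z)"
    by (auto intro!: derivative_eq_intros)
  then show ?thesis
    by (rule has_field_derivative_transform_within_open[where S="{0<..}"]) (use z in \<open>auto simp del: E1_split intro: E1_split[symmetric]\<close>)
qed

lemma E1_isCont: "0 < z \<Longrightarrow> isCont E1 z"
  using E1_deriv DERIV_isCont by blast



definition P :: "real \<Rightarrow> real" where "P u = (LBINT s=ereal 0..ereal u. exp (-(s\<^sup>2)))"
definition TT :: "real \<Rightarrow> real" where "TT u = (LBINT s=ereal u..\<infinity>. exp (-(s\<^sup>2)))"

lemma sqrt_pi_div: "x * 2 * sqrt pi / pi = 2 * x / sqrt pi"
proof -
  have "sqrt pi * sqrt pi = pi" by simp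
  then show ?thesis by (simp add: field_simps)
qed

lemma P_deriv: "(P has_real_derivative exp (-(x\<^sup>2))) (at x)"
proof -
  define a where "a = min 0 (x-1)"
  define b where "b = max 0 (x+1)"
  have ab: "a \<le> 0" "0 \<le> b" "a < x" "x < b" by (auto simp: a_def b_def)
  have "((\<lambda>u. LBINT s=ereal 0..ereal u. exp (-(s\<^sup>2))) has_vector_derivative exp (-(x\<^sup>2))) (at x within {a..b})"
    using ab by (intro interval_integral_FTC2) (auto intro!: continuous_intros)
  then show ?thesis
    using ab by (simp add: at_within_Icc_at has_real_derivative_iff_has_vector_derivative P_def[abs_def])
qed

lemma erfc_P: "erfc u = 1 - 2 / sqrt pi * P u"
proof -
  have gint: "\<And>a b. interval_lebesgue_integrable lborel (ereal a) (ereal b) (\<lambda>s. exp (-(s\<^sup>2)))"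
    by (intro interval_integrable_isCont) (auto intro!: continuous_intros)
  have int: "interval_lebesgue_integrable lborel (min (ereal (-u)) (min (ereal 0) (ereal u))) (max (ereal (-u)) (max (ereal 0) (ereal u))) (\<lambda>s. exp (-(s\<^sup>2)))"
    by (simp add: min_def max_def gint)
  have "(LBINT s=ereal (-u)..ereal 0. exp (-(s\<^sup>2))) + (LBINT s=ereal 0..ereal u. exp (-(s\<^sup>2))) = (LBINT s=ereal (-u)..ereal u. exp (-(s\<^sup>2)))"
    by (rule interval_integral_sum[OF int])
  moreover have "(LBINT s=ereal (-u)..ereal 0. exp (-(s\<^sup>2))) = (LBINT s=ereal 0..ereal u. exp (-(s\<^sup>2)))"
    by (subst interval_integral_reflect) simp
  ultimately show ?thesis unfolding erfc_def P_def by simp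
qed

lemma erfc_deriv: "(erfc has_real_derivative (- 2 / sqrt pi * exp (-(x\<^sup>2)))) (at x)"
proof -
  have "((\<lambda>u. 1 - 2 / sqrt pi * P u) has_real_derivative (- 2 / sqrt pi * exp (-(x\<^sup>2)))) (at x)"
    by (auto intro!: derivative_eq_intros P_deriv simp: sqrt_pi_div)
  then show ?thesis by (simp add: erfc_P[abs_def])
qed

lemma gauss_int: "set_integrable lborel {0<..} (\<lambda>s::real. exp (-(s\<^sup>2)))"
  and gauss_val: "(LINT s:{0<..}|lborel. exp (-((s::real)\<^sup>2))) = sqrt pi / 2"
proof -
  have hb: "has_bochner_integral lborel (\<lambda>x. indicator {0..} x *\<^sub>R exp (- x\<^sup>2)) (sqrt pi / 2)"
    by (rule gaussian_moment_0)
  have i0: "set_integrable lborel {0..} (\<lambda>s::real. exp (-(s\<^sup>2)))"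
    using hb unfolding set_integrable_def has_bochner_integral_iff by simp
  show "set_integrable lborel {0<..} (\<lambda>s::real. exp (-(s\<^sup>2)))"
    by (rule set_integrable_subset[OF i0]) auto
  have "(LINT s:{0<..}|lborel. exp (-((s::real)\<^sup>2))) = (LINT s:{0..}|lborel. exp (-((s::real)\<^sup>2)))"
    apply (rule set_integral_cong_set)
    subgoal unfolding set_borel_measurable_def by (intro borel_measurable_scaleR borel_measurable_indicator) auto
    subgoal unfolding set_borel_measurable_def by (intro borel_measurable_scaleR borel_measurable_indicator) auto
    subgoal by (rule eventually_mono[OF AE_lborel_singleton[of "0::real"]]) auto
    done
  also have "\<dots> = sqrt pi / 2"
    using hb unfolding set_lebesgue_integral_def by (simp add: has_bochner_integral_integral_eq)
  finally show "(LINT s:{0<..}|lborel. exp (-((s::real)\<^sup>2))) = sqrt pi / 2" .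
qed

lemma P_TT: "0 \<le> u \<Longrightarrow> P u + TT u = sqrt pi / 2"
proof -
  assume u: "0 \<le> u"
  have int: "interval_lebesgue_integrable lborel (min (ereal 0) (min (ereal u) \<infinity>)) (max (ereal 0) (max (ereal u) \<infinity>)) (\<lambda>s. exp (-(s\<^sup>2)))"
    using u gauss_int by (simp add: interval_integrable_to_infinity_eq)
  have "P u + TT u = (LBINT s=ereal 0..\<infinity>. exp (-(s\<^sup>2)))"
    unfolding P_def TT_def by (rule interval_integral_sum[OF int])
  also have "\<dots> = sqrt pi / 2" using gauss_val by (simp add: interval_integral_to_infinity_eq)
  finally show ?thesis .
qed

lemma erfc_TT: "0 \<le> u \<Longrightarrow> erfc u = 2 / sqrt pi * TT u"
  using P_TT[of u] by (simp add: erfc_P field_simps)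

lemma P_nonneg: "0 \<le> u \<Longrightarrow> 0 \<le> P u"
  unfolding P_def
  by (simp add: interval_lebesgue_integral_le_eq set_lebesgue_integral_def)


lemma erfc_le1: "0 \<le> u \<Longrightarrow> erfc u \<le> 1"
  using P_nonneg[of u] by (simp add: erfc_P)

lemma TT_bound: "1 \<le> u \<Longrightarrow> TT u \<le> exp (-(u\<^sup>2)) / 2"
proof -
  assume u: "1 \<le> u"
  have A: "set_integrable lborel (einterval (ereal u) \<infinity>) (\<lambda>s. s * exp (-(s\<^sup>2)))"
   and B: "(LBINT s=ereal u..\<infinity>. s * exp (-(s\<^sup>2))) = 0 - (- exp (-(u\<^sup>2)) / 2)"
  proof -
    have l1: "(((\<lambda>s. - exp (-(s\<^sup>2)) / 2) \<circ> real_of_ereal) \<longlongrightarrow> - exp (-(u\<^sup>2)) / 2) (at_right (ereal u))"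
      unfolding ereal_tendsto_simps1 by (auto intro!: tendsto_intros)
    have l2: "(((\<lambda>s. - exp (-(s\<^sup>2)) / 2) \<circ> real_of_ereal) \<longlongrightarrow> 0) (at_left \<infinity>)"
      unfolding ereal_tendsto_simps1 by real_asymp
    note * = interval_integral_FTC_nonneg[where F="\<lambda>s. - exp (-(s\<^sup>2)) / 2" and f="\<lambda>s. s * exp (-(s\<^sup>2))", OF _ _ _ _ l1 l2]
    have d: "\<And>x. ereal u < ereal x \<Longrightarrow> ((\<lambda>s. - exp (-(s\<^sup>2)) / 2) has_real_derivative x * exp (-(x\<^sup>2))) (at x)"
      by (auto intro!: derivative_eq_intros)
    have nn: "AE x in lborel. ereal u < ereal x \<longrightarrow> ereal x < \<infinity> \<longrightarrow> 0 \<le> x * exp (-(x\<^sup>2))"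
      using u by (intro AE_I2) auto
    show "set_integrable lborel (einterval (ereal u) \<infinity>) (\<lambda>s. s * exp (-(s\<^sup>2)))"
      by (rule *(1)) (use d nn in auto)
    show "(LBINT s=ereal u..\<infinity>. s * exp (-(s\<^sup>2))) = 0 - (- exp (-(u\<^sup>2)) / 2)"
      by (rule *(2)) (use d nn in auto)
  qed
  have "TT u = (LINT s:{u<..}|lborel. exp (-(s\<^sup>2)))" unfolding TT_def by (simp add: interval_integral_to_infinity_eq)
  also have "\<dots> \<le> (LINT s:{u<..}|lborel. s * exp (-(s\<^sup>2)))"
  proof (rule set_integral_mono)
    show "set_integrable lborel {u<..} (\<lambda>s. exp (-(s\<^sup>2)))"
      by (rule set_integrable_subset[OF gauss_int]) (use u in auto)
    show "set_integrable lborel {u<..} (\<lambda>s. s * exp (-(s\<^sup>2)))" using A by simp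
  qed (use u in auto)
  also have "\<dots> = exp (-(u\<^sup>2)) / 2" using B by (simp add: interval_integral_to_infinity_eq)
  finally show ?thesis .
qed

lemma erfc_bound: "1 \<le> u \<Longrightarrow> erfc u \<le> exp (-(u\<^sup>2)) / sqrt pi"
proof -
  assume u: "1 \<le> u"
  have "erfc u = 2 / sqrt pi * TT u" using u by (simp add: erfc_TT)
  also have "\<dots> \<le> 2 / sqrt pi * (exp (-(u\<^sup>2)) / 2)"
    using TT_bound[OF u] by (intro mult_left_mono) auto
  also have "\<dots> = exp (-(u\<^sup>2)) / sqrt pi" by simp
  finally show ?thesis .
qed



lemma exp_int_val: fixes z :: real shows "(LINT s:{z<..}|lborel. exp (-s)) = exp (-z)"
proof -
  have "(LBINT s=ereal z..\<infinity>. exp (-s)) = 0 - (- exp (-z))"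
  proof (rule interval_integral_FTC_nonneg(2)[where F="\<lambda>s. - exp (-s)"])
    show "(((\<lambda>s. - exp (- s)) \<circ> real_of_ereal) \<longlongrightarrow> - exp (- z)) (at_right (ereal z))"
      unfolding ereal_tendsto_simps1 by (intro tendsto_intros)
    show "(((\<lambda>s. - exp (- s)) \<circ> real_of_ereal) \<longlongrightarrow> 0) (at_left \<infinity>)"
      unfolding ereal_tendsto_simps1 by real_asymp
  qed (auto intro!: derivative_eq_intros)
  then show ?thesis by (simp add: interval_integral_to_infinity_eq)
qed

lemma E1_upper: "0 < z \<Longrightarrow> E1 z \<le> exp (-z) / z"
proof -
  assume z: "0 < z"
  have "E1 z = (LINT s:{z<..}|lborel. exp (-s) / s)" unfolding E1_def by (simp add: interval_integral_to_infinity_eq)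
  also have "\<dots> \<le> (LINT s:{z<..}|lborel. exp (-s) / z)"
    using z h_int[OF z] exp_int[of z]
    by (intro set_integral_mono) (auto intro!: divide_left_mono simp: set_integrable_divide)
  also have "\<dots> = exp (-z) / z" using exp_int_val[of z] by simp
  finally show ?thesis .
qed

lemma E1_lower_near0: "0 < z \<Longrightarrow> z < 1 \<Longrightarrow> E1 z \<le> E1 1 - ln z"
proof -
  assume z: "0 < z" "z < 1"
  have "E1 z = E1 1 + (LBINT s=ereal z..ereal 1. exp (-s) / s)"
    using E1_split[OF z(1)] by (subst interval_integral_endpoints_reverse) simp
  also have "(LBINT s=ereal z..ereal 1. exp (-s) / s) \<le> (LBINT s=ereal z..ereal 1. 1 / s)"
  proof -
    have i1: "set_integrable lborel {z<..<1} (\<lambda>s. exp (-s) / s)"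
      using interval_integrable_isCont[of z 1 "\<lambda>s. exp (-s) / s"] z
      by (auto intro!: continuous_intros simp: interval_lebesgue_integrable_def)
    have i2: "set_integrable lborel {z<..<1} (\<lambda>s. 1 / s)"
      using interval_integrable_isCont[of z 1 "\<lambda>s. 1 / s"] z
      by (auto intro!: continuous_intros simp: interval_lebesgue_integrable_def)
    show ?thesis using z
      by (simp add: interval_lebesgue_integral_le_eq)
         (rule set_integral_mono[OF i1 i2], auto simp: einterval_iff intro!: divide_right_mono)
  qed
  also have "(LBINT s=ereal z..ereal 1. 1 / s) = ln 1 - ln z"
    using z by (intro interval_integral_FTC_finite)
      (auto intro!: continuous_intros derivative_eq_intros simp: has_real_derivative_iff_has_vector_derivative[symmetric])
  finally show ?thesis by simp
qed

definition Kf :: "real \<Rightarrow> real" where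
  "Kf u = erfc u - 1 / sqrt pi * u * E1 (u\<^sup>2)"

lemma Kf_deriv: "0 < u \<Longrightarrow> (Kf has_real_derivative (- (E1 (u\<^sup>2) / sqrt pi))) (at u)"
proof -
  assume u: "0 < u"
  have E: "((\<lambda>u. E1 (u\<^sup>2)) has_real_derivative (-(exp (-(u\<^sup>2)) / u\<^sup>2)) * (2 * u)) (at u)"
    by (rule DERIV_chain2[OF E1_deriv]) (use u in \<open>auto intro!: derivative_eq_intros\<close>)
  have M: "((\<lambda>z. z * E1 (z\<^sup>2)) has_real_derivative (1 * E1 (u\<^sup>2) + ((-(exp (-(u\<^sup>2)) / u\<^sup>2)) * (2 * u)) * u)) (at u)"
    by (rule DERIV_mult[OF DERIV_ident E])
  have "((\<lambda>u. erfc u - 1 / sqrt pi * (u * E1 (u\<^sup>2))) has_real_derivative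
     (- 2 / sqrt pi * exp (-(u\<^sup>2))) - 1 / sqrt pi * (1 * E1 (u\<^sup>2) + ((-(exp (-(u\<^sup>2)) / u\<^sup>2)) * (2 * u)) * u)) (at u)"
    by (intro DERIV_diff DERIV_cmult erfc_deriv M)
  moreover have "(- 2 / sqrt pi * exp (-(u\<^sup>2))) - 1 / sqrt pi * (1 * E1 (u\<^sup>2) + ((-(exp (-(u\<^sup>2)) / u\<^sup>2)) * (2 * u)) * u) = - (E1 (u\<^sup>2) / sqrt pi)"
    using u by (simp add: field_simps power2_eq_square)
  ultimately show ?thesis unfolding Kf_def[abs_def] by (simp add: mult.assoc)
qed

lemma Kf_isCont: "0 < u \<Longrightarrow> isCont Kf u"
  using Kf_deriv DERIV_isCont by blast

lemma E1sq_isCont: "0 < u \<Longrightarrow> isCont (\<lambda>u. E1 (u\<^sup>2)) u"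
  by (rule isCont_o2[OF _ E1_isCont]) auto

lemma uE1_nonneg: "0 < u \<Longrightarrow> 0 \<le> 1 / sqrt pi * u * E1 (u\<^sup>2)"
  using E1_nonneg[of "u\<^sup>2"] by simp

lemma Kf_le1: "0 < u \<Longrightarrow> Kf u \<le> 1"
  using erfc_le1[of u] uE1_nonneg[of u] unfolding Kf_def by linarith

lemma Kf_upper: "1 \<le> u \<Longrightarrow> Kf u \<le> exp (-(u\<^sup>2)) / sqrt pi"
  using erfc_bound[of u] uE1_nonneg[of u] unfolding Kf_def by linarith

lemma TT_nonneg: "0 \<le> TT u"
  unfolding TT_def interval_integral_to_infinity_eq set_lebesgue_integral_def
  by (intro integral_nonneg_AE AE_I2) (auto split: split_indicator)

lemma Kf_lower: "0 < u \<Longrightarrow> - exp (-(u\<^sup>2)) / (u * sqrt pi) \<le> Kf u"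
proof -
  assume u: "0 < u"
  have "u * E1 (u\<^sup>2) \<le> u * (exp (-(u\<^sup>2)) / u\<^sup>2)"
    using E1_upper[of "u\<^sup>2"] u by (intro mult_left_mono) auto
  also have "\<dots> = exp (-(u\<^sup>2)) / u" using u by (simp add: power2_eq_square)
  finally have "u * E1 (u\<^sup>2) \<le> exp (-(u\<^sup>2)) / u" .
  moreover have "0 \<le> erfc u" using erfc_TT[of u] u TT_nonneg[of u] by simp
  then have "0 \<le> erfc u * sqrt pi" by simp
  ultimately have "- (exp (-(u\<^sup>2)) / u) / sqrt pi \<le> Kf u"
    unfolding Kf_def by (simp add: field_simps)
  then show ?thesis by (simp add: field_simps)
qed



lemma Kf_lim_top: "(Kf \<longlongrightarrow> 0) at_top"
proof (rule tendsto_sandwich[where f="\<lambda>u. - exp (-(u\<^sup>2)) / (u * sqrt pi)" and h="\<lambda>u. exp (-(u\<^sup>2)) / sqrt pi"])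
  show "\<forall>\<^sub>F n in at_top. - exp (- n\<^sup>2) / (n * sqrt pi) \<le> Kf n"
    using eventually_gt_at_top[of 0] by (rule eventually_mono) (rule Kf_lower)
  show "\<forall>\<^sub>F n in at_top. Kf n \<le> exp (- n\<^sup>2) / sqrt pi"
    using eventually_ge_at_top[of 1] by (rule eventually_mono) (rule Kf_upper)
  show "((\<lambda>u. - exp (- u\<^sup>2) / (u * sqrt pi)) \<longlongrightarrow> 0) at_top" by real_asymp
  show "((\<lambda>u. exp (- u\<^sup>2) / sqrt pi) \<longlongrightarrow> 0) at_top" by real_asymp
qed

lemma Kf_tail:
  assumes u: "0 < u"
  shows "set_integrable lborel {u<..} (\<lambda>s. E1 (s\<^sup>2) / sqrt pi)"
    and "(LINT s:{u<..}|lborel. E1 (s\<^sup>2) / sqrt pi) = Kf u"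
proof -
  have l1: "(((\<lambda>s. - Kf s) \<circ> real_of_ereal) \<longlongrightarrow> - Kf u) (at_right (ereal u))"
    unfolding ereal_tendsto_simps1
    using continuous_at_imp_continuous_at_within[OF Kf_isCont[OF u], of "{u<..}"]
    unfolding continuous_within by (intro tendsto_intros)
  have l2: "(((\<lambda>s. - Kf s) \<circ> real_of_ereal) \<longlongrightarrow> - 0) (at_left \<infinity>)"
    unfolding ereal_tendsto_simps1 by (intro tendsto_intros Kf_lim_top)
  have d: "\<And>x. ereal u < ereal x \<Longrightarrow> ((\<lambda>s. - Kf s) has_real_derivative E1 (x\<^sup>2) / sqrt pi) (at x)"
  proof -
    fix x assume "ereal u < ereal x"
    then have x: "0 < x" using u by simp
    show "((\<lambda>s. - Kf s) has_real_derivative E1 (x\<^sup>2) / sqrt pi) (at x)"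
      using DERIV_minus[OF Kf_deriv[OF x]] by simp
  qed
  have c: "\<And>x. ereal u < ereal x \<Longrightarrow> isCont (\<lambda>s. E1 (s\<^sup>2) / sqrt pi) x"
    using u by (auto intro!: continuous_intros E1sq_isCont)
  have nn: "AE x in lborel. ereal u < ereal x \<longrightarrow> ereal x < \<infinity> \<longrightarrow> 0 \<le> E1 (x\<^sup>2) / sqrt pi"
    using u by (intro AE_I2) (auto intro!: divide_nonneg_nonneg E1_nonneg)
  note * = interval_integral_FTC_nonneg[where F="\<lambda>s. - Kf s" and f="\<lambda>s. E1 (s\<^sup>2) / sqrt pi", OF _ _ _ _ l1 l2]
  show "set_integrable lborel {u<..} (\<lambda>s. E1 (s\<^sup>2) / sqrt pi)"
    using *(1) d c nn by auto
  show "(LINT s:{u<..}|lborel. E1 (s\<^sup>2) / sqrt pi) = Kf u"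
    using *(2) d c nn by (auto simp: interval_integral_to_infinity_eq)
qed

lemma Kf_nonneg: "0 < u \<Longrightarrow> 0 \<le> Kf u"
  using Kf_tail(2)[of u, symmetric] unfolding set_lebesgue_integral_def
  by (auto intro!: divide_nonneg_nonneg integral_nonneg_AE AE_I2 E1_nonneg split: split_indicator)

lemma erfc_0: "erfc 0 = 1" by (simp add: erfc_P P_def)

lemma uE1_lim0: "((\<lambda>u. u * E1 (u\<^sup>2)) \<longlongrightarrow> 0) (at_right 0)"
proof (rule tendsto_sandwich[where f="\<lambda>u. 0" and h="\<lambda>u. u * (E1 1 - 2 * ln u)"])
  have ev: "\<forall>\<^sub>F u in at_right 0. 0 < u \<and> u < (1::real)"
    using eventually_at_right_real[of 0 1] by simp
  show "\<forall>\<^sub>F n in at_right 0. 0 \<le> n * E1 (n\<^sup>2)"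
    using ev by (rule eventually_mono) (auto intro!: mult_nonneg_nonneg E1_nonneg)
  show "\<forall>\<^sub>F n in at_right 0. n * E1 (n\<^sup>2) \<le> n * (E1 1 - 2 * ln n)"
    using ev
  proof (rule eventually_mono)
    fix n :: real assume n: "0 < n \<and> n < 1"
    then have "n\<^sup>2 < 1" by (simp add: power_less_one_iff abs_less_iff)
    then have "E1 (n\<^sup>2) \<le> E1 1 - ln (n\<^sup>2)" using n by (intro E1_lower_near0) auto
    also have "ln (n\<^sup>2) = 2 * ln n" using n by (simp add: ln_realpow)
    finally show "n * E1 (n\<^sup>2) \<le> n * (E1 1 - 2 * ln n)" using n by (intro mult_left_mono) auto
  qed
  show "((\<lambda>u. 0::real) \<longlongrightarrow> 0) (at_right 0)" by simp
  show "((\<lambda>u. u * (E1 1 - 2 * ln u)) \<longlongrightarrow> 0) (at_right 0)" by real_asymp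
qed

lemma Kf_lim0: "(Kf \<longlongrightarrow> 1) (at_right 0)"
proof -
  have "isCont erfc 0" using erfc_deriv DERIV_isCont by blast
  then have e: "(erfc \<longlongrightarrow> 1) (at_right 0)"
    using erfc_0 by (metis isCont_def tendsto_mono at_le top_greatest)
  have "((\<lambda>u. erfc u - 1 / sqrt pi * (u * E1 (u\<^sup>2))) \<longlongrightarrow> 1 - 1 / sqrt pi * 0) (at_right 0)"
    by (intro tendsto_intros e uE1_lim0)
  then show ?thesis unfolding Kf_def[abs_def] by (simp add: mult.assoc)
qed

lemma E1sq_int: "set_integrable lborel {0<..} (\<lambda>s. E1 (s\<^sup>2) / sqrt pi)"
proof -
  have l1: "(((\<lambda>s. - Kf s) \<circ> real_of_ereal) \<longlongrightarrow> - 1) (at_right (ereal 0))"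
    unfolding ereal_tendsto_simps1 by (intro tendsto_intros Kf_lim0)
  have l2: "(((\<lambda>s. - Kf s) \<circ> real_of_ereal) \<longlongrightarrow> - 0) (at_left \<infinity>)"
    unfolding ereal_tendsto_simps1 by (intro tendsto_intros Kf_lim_top)
  have d: "\<And>x. ereal 0 < ereal x \<Longrightarrow> ((\<lambda>s. - Kf s) has_real_derivative E1 (x\<^sup>2) / sqrt pi) (at x)"
    using Kf_deriv DERIV_minus by fastforce
  have c: "\<And>x. ereal 0 < ereal x \<Longrightarrow> isCont (\<lambda>s. E1 (s\<^sup>2) / sqrt pi) x"
    by (auto intro!: continuous_intros E1sq_isCont)
  have nn: "AE x in lborel. ereal 0 < ereal x \<longrightarrow> ereal x < \<infinity> \<longrightarrow> 0 \<le> E1 (x\<^sup>2) / sqrt pi"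
    by (intro AE_I2) (auto intro!: divide_nonneg_nonneg E1_nonneg)
  show ?thesis
    using interval_integral_FTC_nonneg(1)[where F="\<lambda>s. - Kf s" and f="\<lambda>s. E1 (s\<^sup>2) / sqrt pi", OF _ _ _ _ l1 l2] d c nn
    by auto
qed

lemma Kf_int: "set_integrable lborel {0<..} Kf"
proof (rule set_integrable_bound[where f="\<lambda>u::real. (exp 1 + 1) * exp (-(u\<^sup>2)) :: real"])
  show "set_integrable lborel {0<..} (\<lambda>u::real. (exp 1 + 1) * exp (- u\<^sup>2) :: real)"
    using gauss_int by (intro set_integrable_mult_right)
  show "set_borel_measurable lborel {0<..} Kf"
    unfolding set_borel_measurable_def measurable_lborel2
    by (intro borel_measurable_continuous_on_indicator continuous_at_imp_continuous_on) (auto intro: Kf_isCont)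
  show "AE x in lborel. x \<in> {0<..} \<longrightarrow> norm (Kf x) \<le> norm ((exp 1 + 1) * exp (- x\<^sup>2))"
  proof (intro AE_I2 impI)
    fix x :: real assume "x \<in> {0<..}"
    then have x: "0 < x" by simp
    have sp: "1 \<le> sqrt pi" using pi_gt3 by simp
    have "Kf x \<le> (exp 1 + 1) * exp (- x\<^sup>2)"
    proof (cases "x \<le> 1")
      case True
      have "exp (-1) \<le> exp (- x\<^sup>2)" using True x by (simp add: power_le_one)
      then have "exp 1 * exp (-1) \<le> exp 1 * exp (- x\<^sup>2)" by simp
      then have "1 \<le> exp 1 * exp (- x\<^sup>2)" by (simp add: exp_minus)
      then have "Kf x \<le> exp 1 * exp (- x\<^sup>2) + exp (- x\<^sup>2)"
        using Kf_le1[OF x] exp_gt_zero[of "- x\<^sup>2"] by linarith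
      then show ?thesis by (simp add: distrib_right)
    next
      case False
      have "Kf x \<le> exp (- x\<^sup>2) / sqrt pi" using False by (intro Kf_upper) auto
      also have "\<dots> \<le> exp (- x\<^sup>2)" using sp by (simp add: divide_le_eq)
      also have "\<dots> \<le> (exp 1 + 1) * exp (- x\<^sup>2)" by simp
      finally show ?thesis .
    qed
    then show "norm (Kf x) \<le> norm ((exp 1 + 1) * exp (- x\<^sup>2))"
      using Kf_nonneg[OF x] by simp
  qed
qed



lemma int_E1sin: "set_integrable lborel {0<..} (\<lambda>u. E1 (u\<^sup>2) / sqrt pi * sin (b * u))"
proof (rule set_integrable_bound[OF E1sq_int])
  show "set_borel_measurable lborel {0<..} (\<lambda>u. E1 (u\<^sup>2) / sqrt pi * sin (b * u))"
    unfolding set_borel_measurable_def measurable_lborel2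
    by (intro borel_measurable_continuous_on_indicator continuous_at_imp_continuous_on)
       (auto intro!: continuous_intros E1sq_isCont)
  show "AE x in lborel. x \<in> {0<..} \<longrightarrow> norm (E1 (x\<^sup>2) / sqrt pi * sin (b * x)) \<le> norm (E1 (x\<^sup>2) / sqrt pi)"
    by (intro AE_I2) (auto simp: abs_mult intro!: divide_right_mono mult_left_le)
qed

lemma int_Kcos: "set_integrable lborel {0<..} (\<lambda>u. Kf u * cos (b * u))"
proof (rule set_integrable_bound[OF Kf_int])
  show "set_borel_measurable lborel {0<..} (\<lambda>u. Kf u * cos (b * u))"
    unfolding set_borel_measurable_def measurable_lborel2
    by (intro borel_measurable_continuous_on_indicator continuous_at_imp_continuous_on)
       (auto intro!: continuous_intros Kf_isCont)
  show "AE x in lborel. x \<in> {0<..} \<longrightarrow> norm (Kf x * cos (b * x)) \<le> norm (Kf x)"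
    by (intro AE_I2) (auto simp: abs_mult intro!: mult_left_le)
qed

lemma main_ibp:
  "b * (LINT u:{0<..}|lborel. Kf u * cos (b * u)) = (LINT u:{0<..}|lborel. E1 (u\<^sup>2) / sqrt pi * sin (b * u))"
proof -
  define f where "f u = - (E1 (u\<^sup>2) / sqrt pi * sin (b * u)) + b * (Kf u * cos (b * u))" for u
  have "(LBINT u=ereal 0..\<infinity>. f u) = 0 - 0"
  proof (rule interval_integral_FTC_integrable[where F="\<lambda>u. Kf u * sin (b * u)"])
    show "ereal 0 < \<infinity>" by simp
    fix x assume "ereal 0 < ereal x"
    then have x: "0 < x" by simp
    have "((\<lambda>u. Kf u * sin (b * u)) has_real_derivative (- (E1 (x\<^sup>2) / sqrt pi)) * sin (b * x) + cos (b * x) * (b * 1) * Kf x) (at x)"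
      by (intro DERIV_mult Kf_deriv[OF x] DERIV_chain2[OF DERIV_sin DERIV_cmult[OF DERIV_ident]])
    then show "((\<lambda>u. Kf u * sin (b * u)) has_vector_derivative f x) (at x)"
      unfolding f_def has_real_derivative_iff_has_vector_derivative[symmetric] by (simp add: algebra_simps)
    show "isCont f x"
      unfolding f_def using x by (auto intro!: continuous_intros E1sq_isCont Kf_isCont)
  next
    show "set_integrable lborel (einterval (ereal 0) \<infinity>) f"
      unfolding f_def using int_E1sin[of b] int_Kcos[of b] by simp
  next
    show "(((\<lambda>u. Kf u * sin (b * u)) \<circ> real_of_ereal) \<longlongrightarrow> 0) (at_right (ereal 0))"
      unfolding ereal_tendsto_simps1
    proof (rule Lim_null_comparison[where g="\<lambda>u. \<bar>sin (b * u)\<bar>"])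
      show "\<forall>\<^sub>F x in at_right 0. norm (Kf x * sin (b * x)) \<le> \<bar>sin (b * x)\<bar>"
        using eventually_at_right_less[of "0::real"]
      proof (rule eventually_mono)
        fix x :: real assume "0 < x"
        then show "norm (Kf x * sin (b * x)) \<le> \<bar>sin (b * x)\<bar>"
          using Kf_nonneg Kf_le1 by (auto simp: abs_mult intro!: mult_left_le_one_le)
      qed
      have "((\<lambda>u. \<bar>sin (b * u)\<bar>) \<longlongrightarrow> \<bar>sin (b * 0)\<bar>) (at_right 0)"
        by (intro tendsto_intros)
      then show "((\<lambda>u. \<bar>sin (b * u)\<bar>) \<longlongrightarrow> 0) (at_right 0)" by simp
    qed
  next
    show "(((\<lambda>u. Kf u * sin (b * u)) \<circ> real_of_ereal) \<longlongrightarrow> 0) (at_left \<infinity>)"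
      unfolding ereal_tendsto_simps1
    proof (rule Lim_null_comparison[where g="Kf"])
      show "\<forall>\<^sub>F x in at_top. norm (Kf x * sin (b * x)) \<le> Kf x"
        using eventually_gt_at_top[of "0::real"]
      proof (rule eventually_mono)
        fix x :: real assume "0 < x"
        then show "norm (Kf x * sin (b * x)) \<le> Kf x"
          using Kf_nonneg by (auto simp: abs_mult intro!: mult_left_le)
      qed
      show "(Kf \<longlongrightarrow> 0) at_top" by (rule Kf_lim_top)
    qed
  qed
  then have "(LINT u:{0<..}|lborel. f u) = 0" by (simp add: interval_integral_to_infinity_eq)
  moreover have "(LINT u:{0<..}|lborel. f u) = - (LINT u:{0<..}|lborel. E1 (u\<^sup>2) / sqrt pi * sin (b * u)) + b * (LINT u:{0<..}|lborel. Kf u * cos (b * u))"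
    unfolding f_def using int_E1sin[of b] int_Kcos[of b]
    by (simp add: set_integral_add set_integral_uminus)
  ultimately show ?thesis by simp
qed



lemma kern_Q:
  assumes s: "0 < \<sigma>" and r: "r \<noteq> 0"
  shows "kern \<sigma> r = indicator {0<..} r * Kf (r / (\<sigma> * sqrt 2)) + indicator {0<..} (-r) * Kf ((-r) / (\<sigma> * sqrt 2))"
proof -
  have sq: "(\<bar>r\<bar> / (\<sigma> * sqrt 2))\<^sup>2 = r\<^sup>2 / (2 * \<sigma>\<^sup>2)"
    by (simp add: power_divide power_mult_distrib)
  show ?thesis
  proof (cases "0 < r")
    case True
    then show ?thesis using r sq unfolding kern_def Kf_def by (simp add: abs_of_pos)
  next
    case False
    then have "r < 0" using r by simp
    then show ?thesis using r sq unfolding kern_def Kf_def by (simp add: abs_of_neg)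
  qed
qed

lemma Q_int:
  assumes a: "0 < a"
  shows "integrable lborel (\<lambda>r. indicator {0<..} r * Kf (r / a))"
proof -
  have "integrable lborel (\<lambda>x. indicator {0<..} x *\<^sub>R Kf x)"
    using Kf_int unfolding set_integrable_def .
  moreover have "(\<lambda>x. indicator {0<..} (0 + a * x) * Kf ((0 + a * x) / a)) = (\<lambda>x. indicator {0<..} x *\<^sub>R Kf x)"
    using a by (auto simp: indicator_def zero_less_mult_iff)
  ultimately show ?thesis
    using lborel_integrable_real_affine_iff[of a "\<lambda>r. indicator {0<..} r * Kf (r / a)" 0] a by simp
qed

lemma Qcis_int:
  assumes a: "0 < a"
  shows "integrable lborel (\<lambda>r. complex_of_real (indicator {0<..} r * Kf (r / a)) * cis (r * s))"
proof (rule Bochner_Integration.integrable_bound[OF Q_int[OF a]])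
  have m1: "(\<lambda>r. indicator {0<..} r * Kf (r / a)) \<in> borel_measurable borel"
    using borel_measurable_integrable[OF Q_int[OF a]] by simp
  have m2: "(\<lambda>r. complex_of_real (indicator {0<..} r * Kf (r / a))) \<in> borel_measurable borel"
    using measurable_compose[OF m1 borel_measurable_of_real] by (simp add: comp_def)
  have m3: "(\<lambda>r. cis (r * s)) \<in> borel_measurable borel"
    by (intro borel_measurable_continuous_onI continuous_intros)
  show "(\<lambda>r. complex_of_real (indicator {0<..} r * Kf (r / a)) * cis (r * s)) \<in> borel_measurable lborel"
    using borel_measurable_times[OF m2 m3] by simp
  show "AE x in lborel. norm (complex_of_real (indicator {0<..} x * Kf (x / a)) * cis (x * s)) \<le> norm (indicator {0<..} x * Kf (x / a))"
    by (intro AE_I2) (simp add: norm_mult)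
qed



theorem theorem5:
  fixes \<sigma> t :: real
  assumes "\<sigma> > 0" and "t \<noteq> 0"
  shows "fourier (kern \<sigma>) t =
    complex_of_real (2 / (t * sqrt pi) *
      (LBINT r=0..\<infinity>. E1 (r\<^sup>2) * sin (\<sigma> * sqrt 2 * t * r)))"
proof -
  define a where "a = \<sigma> * sqrt 2"
  have a: "0 < a" using assms(1) by (simp add: a_def)
  define b where "b = \<sigma> * sqrt 2 * t"
  have ab: "b = a * t" by (simp add: a_def b_def)
  define Q where "Q r = indicator {0<..} r * Kf (r / a)" for r
  have QI: "\<And>s. integrable lborel (\<lambda>r. complex_of_real (Q r) * cis (r * s))"
    unfolding Q_def by (rule Qcis_int[OF a])
  have QI2: "integrable lborel (\<lambda>r. complex_of_real (Q (-r)) * cis (r * t))"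
    using lborel_integrable_real_affine_iff[of "-1" "\<lambda>r. complex_of_real (Q r) * cis (r * (-t))" 0] QI[of "-t"]
    by simp
  have "fourier (kern \<sigma>) t = (LINT r|lborel. complex_of_real (Q r) * cis (r * t) + complex_of_real (Q (-r)) * cis (r * t))"
    unfolding fourier_def
  proof (rule integral_discrete_difference[where X="{0}"])
    fix x :: real assume "x \<in> space lborel" "x \<notin> {0}"
    then have "x \<noteq> 0" by simp
    then show "complex_of_real (kern \<sigma> x) * cis (x * t) = complex_of_real (Q x) * cis (x * t) + complex_of_real (Q (-x)) * cis (x * t)"
      using kern_Q[OF assms(1), of x] by (simp add: Q_def a_def distrib_right)
  qed auto
  also have "\<dots> = (LINT r|lborel. complex_of_real (Q r) * cis (r * t)) + (LINT r|lborel. complex_of_real (Q (-r)) * cis (r * t))"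
    by (rule Bochner_Integration.integral_add[OF QI QI2])
  also have "(LINT r|lborel. complex_of_real (Q (-r)) * cis (r * t)) = (LINT r|lborel. complex_of_real (Q r) * cis (r * (-t)))"
    using lborel_integral_real_affine[of "-1" "\<lambda>r. complex_of_real (Q r) * cis (r * (-t))" 0] by simp
  also have "(LINT r|lborel. complex_of_real (Q r) * cis (r * t)) + \<dots> = (LINT r|lborel. complex_of_real (Q r) * cis (r * t) + complex_of_real (Q r) * cis (r * (-t)))"
    by (rule Bochner_Integration.integral_add[OF QI QI, symmetric])
  also have "\<dots> = (LINT r|lborel. complex_of_real (2 * (Q r * cos (r * t))))"
    by (rule Bochner_Integration.integral_cong) (auto simp: complex_eq_iff)
  also have "\<dots> = complex_of_real (LINT r|lborel. 2 * (Q r * cos (r * t)))"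
    by (rule integral_complex_of_real)
  also have "\<dots> = complex_of_real (2 * (LINT r|lborel. Q r * cos (r * t)))"
    by (simp only: integral_mult_right_zero)
  also have "(LINT r|lborel. Q r * cos (r * t)) = a * (LINT u:{0<..}|lborel. Kf u * cos (b * u))"
  proof -
    have "(LINT r|lborel. Q r * cos (r * t)) = \<bar>a\<bar> *\<^sub>R (LINT u|lborel. Q (0 + a * u) * cos ((0 + a * u) * t))"
      using a by (intro lborel_integral_real_affine) simp
    also have "(\<lambda>u. Q (0 + a * u) * cos ((0 + a * u) * t)) = (\<lambda>u. indicator {0<..} u *\<^sub>R (Kf u * cos (b * u)))"
      using a by (auto simp: Q_def ab indicator_def zero_less_mult_iff mult.commute mult.left_commute)
    finally show ?thesis using a by (simp add: set_lebesgue_integral_def)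
  qed
  finally have F: "fourier (kern \<sigma>) t = complex_of_real (2 * (a * (LINT u:{0<..}|lborel. Kf u * cos (b * u))))" .
  have mi: "b * (LINT u:{0<..}|lborel. Kf u * cos (b * u)) = (LINT u:{0<..}|lborel. E1 (u\<^sup>2) / sqrt pi * sin (b * u))"
    by (rule main_ibp)
  have J: "(LINT u:{0<..}|lborel. E1 (u\<^sup>2) / sqrt pi * sin (b * u)) = (LINT u:{0<..}|lborel. E1 (u\<^sup>2) * sin (b * u)) / sqrt pi"
  proof -
    have "(LINT u:{0<..}|lborel. E1 (u\<^sup>2) / sqrt pi * sin (b * u)) = (LINT u:{0<..}|lborel. E1 (u\<^sup>2) * sin (b * u) / sqrt pi)"
      by (simp add: field_simps)
    also have "\<dots> = (LINT u:{0<..}|lborel. E1 (u\<^sup>2) * sin (b * u)) / sqrt pi"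
      by (rule set_integral_divide_zero)
    finally show ?thesis .
  qed
  have R: "(LBINT r=0..\<infinity>. E1 (r\<^sup>2) * sin (\<sigma> * sqrt 2 * t * r)) = (LINT u:{0<..}|lborel. E1 (u\<^sup>2) * sin (b * u))"
    by (simp add: interval_lebesgue_integral_0_infty b_def)
  have bne: "b \<noteq> 0" using a assms(2) ab by simp
  have "2 * (a * (LINT u:{0<..}|lborel. Kf u * cos (b * u))) = 2 / (t * sqrt pi) * (LINT u:{0<..}|lborel. E1 (u\<^sup>2) * sin (b * u))"
  proof -
    have "(LINT u:{0<..}|lborel. Kf u * cos (b * u)) = (LINT u:{0<..}|lborel. E1 (u\<^sup>2) * sin (b * u)) / sqrt pi / b"
      using mi J bne by (simp add: field_simps)
    then show ?thesis using bne a assms(2) by (simp add: ab field_simps)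
  qed
  then show ?thesis using F R by simp
qed
end
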